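(* Let $V$ be an irreducible $\tau$-module with finite-dimensional weight spaces, and let $z_1,z_2$ be non-zero central operators on $V$ of the same degree $\underline m$. Then $z_1=cz_2$ for some constant $c\in\mathbb C$. In particular, in each degree the non-zero central operators span a space of dimension at most one.
   Context: Let $\mathring{\mathfrak g}$ be a finite-dimensional simple Lie algebra over $\mathbb C$ with Cartan subalgebra $\mathring{\mathfrak h}$ and a nondegenerate invariant symmetric bilinear form $(\cdot,\cdot)$. Fix $n\ge2$, $A=\mathbb C[t_1^{\pm1},\dots,t_n^{\pm1}]$, $t^{\underline m}=t_1^{m_1}\cdots t_n^{m_n}$. Let $\mathcal Z$ be spanned by symbols $t^{\underline m}K_i$ subject to $\sum_im_it^{\underline m}K_i=0$; $K_i=t^0K_i$; $d(t^{\underline r})t^{\underline s}=\sum_ir_it^{\underline r+\underline s}K_i$. The toroidal Lie algebra $\tau=\mathring{\mathfrak g}\otimes A\oplus\mathcal Z\oplus D$, $D=\mathrm{span}(d_1,\dots,d_n)$, has bracket $[X\otimes t^{\underline r},Y\otimes t^{\underline s}]=[X,Y]\otimes t^{\underline r+\underline s}+(X,Y)d(t^{\underline r})t^{\underline s}$, $\mathcal Z$ central in $\mathring{\mathfrak g}\otimes A\oplus\mathcal Z$, $[d_i,X\otimes t^{\underline r}]=r_iX\otimes t^{\underline r}$, $[d_i,t^{\underline m}K_j]=m_it^{\underline m}K_j$, $[d_i,d_j]=0$. Weight spaces are with respect to $\underline{\mathfrak h}=\mathring{\mathfrak h}\oplus\mathrm{span}(K_i)\oplus D$. A central operator of degree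 $\underline m$ on $V$ is a linear map $z:V\to V$ commuting with the action of $\mathring{\mathfrak g}\otimes A\oplus\mathcal Z$ and satisfying $d_iz-zd_i=m_iz$ for all $i$. *)

theory Defs
  imports Complex_Main "HOL-Library.Cardinality"
begin

text \<open>Complex vector spaces are represented by an additive group type together with a
  scalar multiplication \<open>complex \<Rightarrow> 'a \<Rightarrow> 'a\<close> satisfying the library locale \<open>vector_space\<close>.\<close>

definition fin_dim :: "(complex \<Rightarrow> 'a::ab_group_add \<Rightarrow> 'a) \<Rightarrow> 'a set \<Rightarrow> bool" where
  "fin_dim s W \<longleftrightarrow> (\<exists>S. finite S \<and> S \<subseteq> W \<and> module.span s S = W)"

definition lie_algebra :: "(complex \<Rightarrow> 'g::ab_group_add \<Rightarrow> 'g) \<Rightarrow> ('g \<Rightarrow> 'g \<Rightarrow> 'g) \<Rightarrow> bool" where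
  "lie_algebra sg lb \<longleftrightarrow> vector_space sg \<and>
     (\<forall>x. Vector_Spaces.linear sg sg (lb x)) \<and> (\<forall>y. Vector_Spaces.linear sg sg (\<lambda>x. lb x y)) \<and>
     (\<forall>x. lb x x = 0) \<and>
     (\<forall>x y z. lb x (lb y z) + lb y (lb z x) + lb z (lb x y) = 0)"

definition lie_ideal :: "(complex \<Rightarrow> 'g::ab_group_add \<Rightarrow> 'g) \<Rightarrow> ('g \<Rightarrow> 'g \<Rightarrow> 'g) \<Rightarrow> 'g set \<Rightarrow> bool" where
  "lie_ideal sg lb I \<longleftrightarrow> module.subspace sg I \<and> (\<forall>x y. y \<in> I \<longrightarrow> lb x y \<in> I)"

definition simple_lie_algebra :: "(complex \<Rightarrow> 'g::ab_group_add \<Rightarrow> 'g) \<Rightarrow> ('g \<Rightarrow> 'g \<Rightarrow> 'g) \<Rightarrow> bool" where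
  "simple_lie_algebra sg lb \<longleftrightarrow> lie_algebra sg lb \<and> (\<exists>x y. lb x y \<noteq> 0) \<and>
     (\<forall>I. lie_ideal sg lb I \<longrightarrow> I = {0} \<or> I = UNIV)"

definition lie_subalgebra :: "(complex \<Rightarrow> 'g::ab_group_add \<Rightarrow> 'g) \<Rightarrow> ('g \<Rightarrow> 'g \<Rightarrow> 'g) \<Rightarrow> 'g set \<Rightarrow> bool" where
  "lie_subalgebra sg lb H \<longleftrightarrow> module.subspace sg H \<and> (\<forall>x\<in>H. \<forall>y\<in>H. lb x y \<in> H)"

text \<open>A subalgebra is nilpotent iff all sufficiently long nested brackets of its elements
  vanish (its lower central series reaches 0).\<close>
definition nilpotent_subalgebra :: "(complex \<Rightarrow> 'g::ab_group_add \<Rightarrow> 'g) \<Rightarrow> ('g \<Rightarrow> 'g \<Rightarrow> 'g) \<Rightarrow> 'g set \<Rightarrow> bool" where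
  "nilpotent_subalgebra sg lb H \<longleftrightarrow> lie_subalgebra sg lb H \<and>
     (\<exists>k. \<forall>xs y. length xs = k \<and> set xs \<subseteq> H \<and> y \<in> H \<longrightarrow> foldr lb xs y = 0)"

definition normalizer :: "('g \<Rightarrow> 'g \<Rightarrow> 'g) \<Rightarrow> 'g set \<Rightarrow> 'g set" where
  "normalizer lb H = {x. \<forall>y\<in>H. lb x y \<in> H}"

definition cartan_subalgebra :: "(complex \<Rightarrow> 'g::ab_group_add \<Rightarrow> 'g) \<Rightarrow> ('g \<Rightarrow> 'g \<Rightarrow> 'g) \<Rightarrow> 'g set \<Rightarrow> bool" where
  "cartan_subalgebra sg lb H \<longleftrightarrow> nilpotent_subalgebra sg lb H \<and> normalizer lb H = H"

definition nondeg_invariant_symmetric_form ::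
  "(complex \<Rightarrow> 'g::ab_group_add \<Rightarrow> 'g) \<Rightarrow> ('g \<Rightarrow> 'g \<Rightarrow> 'g) \<Rightarrow> ('g \<Rightarrow> 'g \<Rightarrow> complex) \<Rightarrow> bool" where
  "nondeg_invariant_symmetric_form sg lb B \<longleftrightarrow>
     (\<forall>x. Vector_Spaces.linear sg (*) (B x)) \<and> (\<forall>x y. B x y = B y x) \<and>
     (\<forall>x y z. B (lb x y) z = B x (lb y z)) \<and>
     (\<forall>x. (\<forall>y. B x y = 0) \<longrightarrow> x = 0)"

definition base_data ::
  "(complex \<Rightarrow> 'g::ab_group_add \<Rightarrow> 'g) \<Rightarrow> ('g \<Rightarrow> 'g \<Rightarrow> 'g) \<Rightarrow> ('g \<Rightarrow> 'g \<Rightarrow> complex) \<Rightarrow> 'g set \<Rightarrow> bool" where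
  "base_data sg lb B H \<longleftrightarrow> simple_lie_algebra sg lb \<and> fin_dim sg (UNIV :: 'g set) \<and>
     cartan_subalgebra sg lb H \<and> nondeg_invariant_symmetric_form sg lb B"

text \<open>Exponents \<open>r \<in> \<int>^n\<close> are functions \<open>'n \<Rightarrow> int\<close> with \<open>CARD('n) = n\<close>.
  A representation of \<open>\<tau>\<close> on \<open>V\<close> is a linear map \<open>\<tau> \<rightarrow> End(V)\<close> preserving brackets; it is
  determined by its values on spanning elements:
  \<open>X x r\<close> = action of \<open>x \<otimes> t^r\<close>, \<open>K r i\<close> = action of \<open>t^r K_i\<close>, \<open>D i\<close> = action of \<open>d_i\<close>,
  subject to linearity in \<open>x\<close>, the defining relations of \<open>\<Z>\<close>, and the bracket relations
  on spanning elements.\<close>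

definition comm :: "('v::ab_group_add \<Rightarrow> 'v) \<Rightarrow> ('v \<Rightarrow> 'v) \<Rightarrow> ('v \<Rightarrow> 'v)" where
  "comm a b = (\<lambda>v. a (b v) - b (a v))"

definition tau_module ::
  "(complex \<Rightarrow> 'g::ab_group_add \<Rightarrow> 'g) \<Rightarrow> ('g \<Rightarrow> 'g \<Rightarrow> 'g) \<Rightarrow> ('g \<Rightarrow> 'g \<Rightarrow> complex) \<Rightarrow>
   (complex \<Rightarrow> 'v::ab_group_add \<Rightarrow> 'v) \<Rightarrow>
   ('g \<Rightarrow> ('n::finite \<Rightarrow> int) \<Rightarrow> 'v \<Rightarrow> 'v) \<Rightarrow>
   (('n \<Rightarrow> int) \<Rightarrow> 'n \<Rightarrow> 'v \<Rightarrow> 'v) \<Rightarrow> ('n \<Rightarrow> 'v \<Rightarrow> 'v) \<Rightarrow> bool" where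
  "tau_module sg lb B sv X K D \<longleftrightarrow> vector_space sv \<and>
     (\<forall>x r. Vector_Spaces.linear sv sv (X x r)) \<and> (\<forall>r i. Vector_Spaces.linear sv sv (K r i)) \<and>
     (\<forall>i. Vector_Spaces.linear sv sv (D i)) \<and>
     (\<forall>r v. Vector_Spaces.linear sg sv (\<lambda>x. X x r v)) \<and>
     (\<forall>r v. (\<Sum>i\<in>UNIV. sv (of_int (r i)) (K r i v)) = 0) \<and>
     (\<forall>x y r s. comm (X x r) (X y s) =
         (\<lambda>v. X (lb x y) (\<lambda>j. r j + s j) v + sv (B x y) (\<Sum>i\<in>UNIV. sv (of_int (r i)) (K (\<lambda>j. r j + s j) i v)))) \<and>
     (\<forall>x r s j. comm (K s j) (X x r) = (\<lambda>v. 0)) \<and>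
     (\<forall>r i s j. comm (K r i) (K s j) = (\<lambda>v. 0)) \<and>
     (\<forall>i x r. comm (D i) (X x r) = (\<lambda>v. sv (of_int (r i)) (X x r v))) \<and>
     (\<forall>i r j. comm (D i) (K r j) = (\<lambda>v. sv (of_int (r i)) (K r j v))) \<and>
     (\<forall>i j. comm (D i) (D j) = (\<lambda>v. 0))"

text \<open>Weight space for the weight \<open>(\<mu>, k, \<delta>)\<close> of \<open>\<h> \<oplus> span(K_i) \<oplus> D\<close>;
  \<open>h \<in> \<h>\<close> acts as \<open>h \<otimes> t^0\<close>, and \<open>K_i = t^0 K_i\<close>.\<close>
definition weight_space ::
  "'g set \<Rightarrow> (complex \<Rightarrow> 'v::ab_group_add \<Rightarrow> 'v) \<Rightarrow> ('g \<Rightarrow> ('n::finite \<Rightarrow> int) \<Rightarrow> 'v \<Rightarrow> 'v) \<Rightarrow>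
   (('n \<Rightarrow> int) \<Rightarrow> 'n \<Rightarrow> 'v \<Rightarrow> 'v) \<Rightarrow> ('n \<Rightarrow> 'v \<Rightarrow> 'v) \<Rightarrow>
   ('g \<Rightarrow> complex) \<Rightarrow> ('n \<Rightarrow> complex) \<Rightarrow> ('n \<Rightarrow> complex) \<Rightarrow> 'v set" where
  "weight_space H sv X K D \<mu> k \<delta> =
     {v. (\<forall>h\<in>H. X h (\<lambda>_. 0) v = sv (\<mu> h) v) \<and> (\<forall>i. K (\<lambda>_. 0) i v = sv (k i) v) \<and> (\<forall>i. D i v = sv (\<delta> i) v)}"

definition fin_dim_weight_module ::
  "'g set \<Rightarrow> (complex \<Rightarrow> 'v::ab_group_add \<Rightarrow> 'v) \<Rightarrow> ('g \<Rightarrow> ('n::finite \<Rightarrow> int) \<Rightarrow> 'v \<Rightarrow> 'v) \<Rightarrow>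
   (('n \<Rightarrow> int) \<Rightarrow> 'n \<Rightarrow> 'v \<Rightarrow> 'v) \<Rightarrow> ('n \<Rightarrow> 'v \<Rightarrow> 'v) \<Rightarrow> bool" where
  "fin_dim_weight_module H sv X K D \<longleftrightarrow>
     module.span sv (\<Union>\<mu> k \<delta>. weight_space H sv X K D \<mu> k \<delta>) = UNIV \<and>
     (\<forall>\<mu> k \<delta>. fin_dim sv (weight_space H sv X K D \<mu> k \<delta>))"

definition irreducible_module ::
  "(complex \<Rightarrow> 'v::ab_group_add \<Rightarrow> 'v) \<Rightarrow> ('g \<Rightarrow> ('n::finite \<Rightarrow> int) \<Rightarrow> 'v \<Rightarrow> 'v) \<Rightarrow>
   (('n \<Rightarrow> int) \<Rightarrow> 'n \<Rightarrow> 'v \<Rightarrow> 'v) \<Rightarrow> ('n \<Rightarrow> 'v \<Rightarrow> 'v) \<Rightarrow> bool" where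
  "irreducible_module sv X K D \<longleftrightarrow> (UNIV :: 'v set) \<noteq> {0} \<and>
     (\<forall>W. module.subspace sv W \<and> (\<forall>x r. X x r ` W \<subseteq> W) \<and> (\<forall>r i. K r i ` W \<subseteq> W) \<and>
          (\<forall>i. D i ` W \<subseteq> W)
        \<longrightarrow> W = {0} \<or> W = UNIV)"

definition central_operator ::
  "(complex \<Rightarrow> 'v::ab_group_add \<Rightarrow> 'v) \<Rightarrow> ('g \<Rightarrow> ('n::finite \<Rightarrow> int) \<Rightarrow> 'v \<Rightarrow> 'v) \<Rightarrow>
   (('n \<Rightarrow> int) \<Rightarrow> 'n \<Rightarrow> 'v \<Rightarrow> 'v) \<Rightarrow> ('n \<Rightarrow> 'v \<Rightarrow> 'v) \<Rightarrow> ('n \<Rightarrow> int) \<Rightarrow> ('v \<Rightarrow> 'v) \<Rightarrow> bool" where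
  "central_operator sv X K D m z \<longleftrightarrow> Vector_Spaces.linear sv sv z \<and>
     (\<forall>x r. comm z (X x r) = (\<lambda>v. 0)) \<and> (\<forall>r i. comm z (K r i) = (\<lambda>v. 0)) \<and>
     (\<forall>i. comm (D i) z = (\<lambda>v. sv (of_int (m i)) (z v)))"

end

theory Submission
  imports Defs "HOL-Computational_Algebra.Fundamental_Theorem_Algebra"
begin


definition pev :: "('a::field \<Rightarrow> 'b::ab_group_add \<Rightarrow> 'b) \<Rightarrow> ('b \<Rightarrow> 'b) \<Rightarrow> 'a poly \<Rightarrow> 'b \<Rightarrow> 'b" where
  "pev sc T p v = (\<Sum>k\<le>degree p. sc (coeff p k) ((T^^k) v))"

context Vector_Spaces.vector_space
begin

lemma pev_bound:
  assumes "degree p < N"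
  shows "pev (*s) T p v = (\<Sum>k<N. (*s) (coeff p k) ((T^^k) v))"
  unfolding pev_def
proof (rule sum.mono_neutral_left)
  show "\<forall>i\<in>{..<N} - {..degree p}. (*s) (coeff p i) ((T ^^ i) v) = 0"
    by (auto simp: coeff_eq_0)
qed (use assms in auto)

lemma pev_add: "pev (*s) T (p + q) v = pev (*s) T p v + pev (*s) T q v"
proof -
  define N where "N = Suc (max (degree p) (degree q))"
  have "degree (p+q) < N" using degree_add_le_max[of p q] unfolding N_def by linarith
  then have "pev (*s) T (p + q) v = (\<Sum>k<N. (*s) (coeff (p+q) k) ((T^^k) v))" by (rule pev_bound)
  also have "\<dots> = (\<Sum>k<N. (*s) (coeff p k) ((T^^k) v)) + (\<Sum>k<N. (*s) (coeff q k) ((T^^k) v))"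
    by (simp add: scale_left_distrib sum.distrib)
  also have "\<dots> = pev (*s) T p v + pev (*s) T q v"
    by (subst (1 2) pev_bound[of _ N]) (auto simp: N_def)
  finally show ?thesis .
qed

lemma pev_smult: "pev (*s) T (smult a p) v = scale a (pev (*s) T p v)"
proof -
  have "pev (*s) T (smult a p) v = (\<Sum>k<Suc (degree p). (*s) (coeff (smult a p) k) ((T^^k) v))"
    using degree_smult_le[of a p] by (intro pev_bound) auto
  also have "\<dots> = scale a (\<Sum>k<Suc (degree p). (*s) (coeff p k) ((T^^k) v))"
    by (simp only: scale_sum_right scale_scale coeff_smult)
  also have "\<dots> = scale a (pev (*s) T p v)" by (subst pev_bound[of _ "Suc (degree p)"]) auto
  finally show ?thesis .
qed

lemma pev_0: "pev (*s) T 0 v = 0"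
  by (simp add: pev_def)

lemma pev_diff: "pev (*s) T (p - q) v = pev (*s) T p v - pev (*s) T q v"
proof -
  have "pev (*s) T p v = pev (*s) T ((p - q) + q) v" by simp
  also have "\<dots> = pev (*s) T (p - q) v + pev (*s) T q v" by (rule pev_add)
  finally show ?thesis by (simp add: algebra_simps)
qed

lemma pev_monom: "pev (*s) T (monom a i) v = scale a ((T^^i) v)"
proof -
  have "pev (*s) T (monom a i) v = (\<Sum>k<Suc i. (*s) (coeff (monom a i) k) ((T^^k) v))"
    using degree_monom_le[of a i] by (intro pev_bound) auto
  also have "\<dots> = scale a ((T^^i) v)"
    by (simp add: if_distrib[of "\<lambda>c. scale c _"] sum.delta' cong: if_cong)
  finally show ?thesis .
qed

lemma pev_sum: "finite A \<Longrightarrow> pev (*s) T (\<Sum>k\<in>A. p k) v = (\<Sum>k\<in>A. pev (*s) T (p k) v)"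
  by (induction A rule: finite_induct) (auto simp: pev_0 pev_add)

lemma pev_pCons0:
  assumes "Vector_Spaces.linear (*s) (*s) T"
  shows "pev (*s) T (pCons 0 q) v = T (pev (*s) T q v)"
proof -
  define N where "N = Suc (degree q)"
  have "pev (*s) T (pCons 0 q) v = (\<Sum>k<Suc N. (*s) (coeff (pCons 0 q) k) ((T^^k) v))"
    using degree_pCons_le[of 0 q] by (intro pev_bound) (auto simp: N_def)
  also have "\<dots> = (\<Sum>k<N. (*s) (coeff q k) ((T^^Suc k) v))"
    by (subst sum.lessThan_Suc_shift) simp
  also have "\<dots> = T (\<Sum>k<N. (*s) (coeff q k) ((T^^k) v))"
  proof -
    interpret L: Vector_Spaces.linear "(*s)" "(*s)" T by fact
    show ?thesis by (simp add: L.sum L.scale)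
  qed
  also have "\<dots> = T (pev (*s) T q v)" by (subst pev_bound[of _ N]) (auto simp: N_def)
  finally show ?thesis .
qed

end

lemma eigen_exists:
  fixes sv :: "complex \<Rightarrow> 'v::ab_group_add \<Rightarrow> 'v"
  assumes VS: "vector_space sv" and lin: "Vector_Spaces.linear sv sv T"
    and fin: "finite S" and inv: "\<And>x. x \<in> module.span sv S \<Longrightarrow> T x \<in> module.span sv S"
    and w: "w \<in> module.span sv S" "w \<noteq> 0"
  shows "\<exists>c u. u \<in> module.span sv S \<and> u \<noteq> 0 \<and> T u = sv c u"
proof -
  interpret V: Vector_Spaces.vector_space sv by fact
  interpret L: Vector_Spaces.linear sv sv T by fact
  have Tk: "(T^^k) x \<in> V.span S" if "x \<in> V.span S" for k x
    using that by (induction k) (auto intro: inv)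
  have pev_span: "pev sv T p x \<in> V.span S" if "x \<in> V.span S" for p x
    unfolding pev_def using Tk[OF that] by (intro V.span_sum V.span_scale) auto
  have red: "\<exists>c u. u \<in> V.span S \<and> u \<noteq> 0 \<and> T u = sv c u"
    if "p \<noteq> 0" "x \<in> V.span S" "x \<noteq> 0" "pev sv T p x = 0" for p x
    using that
  proof (induction "degree p" arbitrary: p x rule: less_induct)
    case less
    show ?case
    proof (cases "degree p = 0")
      case True
      then obtain a where p: "p = [:a:]" by (metis degree_eq_zeroE)
      then have "a \<noteq> 0" using less by auto
      have "pev sv T p x = sv a x" using True p by (simp add: pev_def)
      with less \<open>a\<noteq>0\<close> show ?thesis by simp
    next
      case False
      then obtain c where "poly p c = 0" using fundamental_theorem_of_algebra[of p] constant_degree[of p] by metis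
      then obtain q where pq: "p = [:-c,1:] * q" by (metis poly_eq_0_iff_dvd dvdE)
      have "q \<noteq> 0" using less pq by auto
      have dq: "degree q < degree p" proof -
        have "degree ([:-c,1:] * q) = degree [:-c,1:] + degree q"
          using \<open>q\<noteq>0\<close> by (intro degree_mult_eq) auto
        then show ?thesis using pq by simp
      qed
      define y where "y = pev sv T q x"
      have "pev sv T p x = T y - sv c y"
        unfolding pq y_def by (simp add: V.pev_add V.pev_diff V.pev_smult V.pev_pCons0[OF lin])
      then have ey: "T y = sv c y" using less(5) by simp
      show ?thesis
      proof (cases "y = 0")
        case True
        then show ?thesis using less.hyps[OF dq \<open>q\<noteq>0\<close> less(3,4)] y_def by simp
      next
        case False
        then show ?thesis using ey pev_span[OF less(3)] y_def by blast
      qed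
    qed
  qed
  define N where "N = card S"
  define f where "f k = (T^^k) w" for k
  have "\<exists>p. p \<noteq> 0 \<and> pev sv T p w = 0"
  proof (cases "inj_on f {..N}")
    case True
    define A where "A = f ` {..N}"
    have cA: "card A = Suc N" unfolding A_def using True by (simp add: card_image)
    have fA: "finite A" unfolding A_def by simp
    have sA: "A \<subseteq> V.span S" unfolding A_def f_def using Tk[OF w(1)] by auto
    have "V.dependent A"
    proof (rule ccontr)
      assume "\<not> V.dependent A"
      from V.independent_span_bound[OF fin this sA] cA N_def show False by simp
    qed
    then obtain u where u: "\<exists>v\<in>A. u v \<noteq> 0" "(\<Sum>v\<in>A. sv (u v) v) = 0"
      using V.dependent_finite[OF fA] by blast
    define p where "p = (\<Sum>k\<le>N. monom (u (f k)) k)"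
    have "pev sv T p w = (\<Sum>k\<le>N. sv (u (f k)) (f k))"
      unfolding p_def by (simp add: V.pev_sum V.pev_monom f_def)
    also have "\<dots> = (\<Sum>v\<in>A. sv (u v) v)"
      unfolding A_def using True by (simp add: sum.reindex)
    finally have "pev sv T p w = 0" using u by simp
    moreover have "p \<noteq> 0"
    proof -
      obtain k where k: "k \<le> N" "u (f k) \<noteq> 0" using u(1) unfolding A_def by auto
      have "coeff p k = u (f k)" unfolding p_def using k(1)
        by (simp add: coeff_sum)
      with k show ?thesis by auto
    qed
    ultimately show ?thesis by blast
  next
    case False
    then obtain i j where ij: "i \<noteq> j" "f i = f j" unfolding inj_on_def by blast
    define p where "p = monom (1::complex) i - monom 1 j"
    have "pev sv T p w = 0" unfolding p_def using ij by (simp add: V.pev_diff V.pev_monom f_def)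
    moreover have "coeff p i = 1" unfolding p_def using ij by simp
    ultimately show ?thesis by (metis coeff_0 zero_neq_one)
  qed
  then show ?thesis using red w by blast
qed



lemma commgD:
  assumes h: "comm a b = g" shows "a (b v) = b (a v) + g v"
proof -
  have "a (b v) - b (a v) = g v" using fun_cong[OF h, of v] unfolding comm_def .
  then show ?thesis by (simp add: diff_eq_eq)
qed

lemma comm0D: "comm a b = (\<lambda>v. 0) \<Longrightarrow> a (b v) = b (a v)"
  using commgD[of a b "\<lambda>v. 0" v] by simp

lemma tauD:
  assumes "tau_module sg lb B sv X K D"
  shows "vector_space sv" "Vector_Spaces.linear sv sv (X x r)" "Vector_Spaces.linear sv sv (K r i)"
    "Vector_Spaces.linear sv sv (D i)"
proof -
  have a1: "vector_space sv" using assms unfolding tau_module_def by (elim conjE) assumption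
  have a2: "\<forall>x r. Vector_Spaces.linear sv sv (X x r)" using assms unfolding tau_module_def by (elim conjE) assumption
  have a3: "\<forall>r i. Vector_Spaces.linear sv sv (K r i)" using assms unfolding tau_module_def by (elim conjE) assumption
  have a4: "\<forall>i. Vector_Spaces.linear sv sv (D i)" using assms unfolding tau_module_def by (elim conjE) assumption
  from a1 a2 a3 a4 show "vector_space sv" "Vector_Spaces.linear sv sv (X x r)" "Vector_Spaces.linear sv sv (K r i)"
    "Vector_Spaces.linear sv sv (D i)" by blast+
qed

lemma centD:
  assumes "central_operator sv X K D m z"
  shows "Vector_Spaces.linear sv sv z" "z (X x r v) = X x r (z v)" "z (K r i v) = K r i (z v)"
    "D i (z v) = z (D i v) + sv (of_int (m i)) (z v)"
proof -
  have a1: "Vector_Spaces.linear sv sv z" using assms unfolding central_operator_def by (elim conjE allE) assumption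
  have a2: "comm z (X x r) = (\<lambda>v. 0)" using assms unfolding central_operator_def by (elim conjE allE) assumption
  have a3: "comm z (K r i) = (\<lambda>v. 0)" using assms unfolding central_operator_def by (elim conjE allE) assumption
  have a4: "comm (D i) z = (\<lambda>v. sv (of_int (m i)) (z v))" using assms unfolding central_operator_def by (elim conjE allE) assumption
  note a = a1 a2 a3 a4
  show "Vector_Spaces.linear sv sv z" by (rule a(1))
  show "z (X x r v) = X x r (z v)" by (rule comm0D[OF a(2)])
  show "z (K r i v) = K r i (z v)" by (rule comm0D[OF a(3)])
  show "D i (z v) = z (D i v) + sv (of_int (m i)) (z v)" using commgD[OF a(4)] by simp
qed

lemma irrD:
  assumes "irreducible_module sv X K D" "module.subspace sv W" "\<forall>x r. X x r ` W \<subseteq> W"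
    "\<forall>r i. K r i ` W \<subseteq> W" "\<forall>i. D i ` W \<subseteq> W"
  shows "W = {0} \<or> W = UNIV"
  using assms unfolding irreducible_module_def by blast

lemma lin_facts:
  assumes "Vector_Spaces.linear s s f"
  shows "f (x + y) = f x + f y" "f (s c x) = s c (f x)" "f 0 = 0" "f (x - y) = f x - f y"
proof -
  interpret L: Vector_Spaces.linear s s f by fact
  show "f (x + y) = f x + f y" "f (s c x) = s c (f x)" "f 0 = 0" "f (x - y) = f x - f y"
    by (simp_all add: L.add L.scale L.diff)
qed

lemma eqset_trivial:
  fixes sv :: "complex \<Rightarrow> 'v::ab_group_add \<Rightarrow> 'v"
  assumes tau: "tau_module sg lb B sv X K D" and irr: "irreducible_module sv X K D"
    and c1: "central_operator sv X K D m z1" and c2: "central_operator sv X K D m z2"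
  shows "{v. z1 v = sv c (z2 v)} = {0} \<or> {v. z1 v = sv c (z2 v)} = UNIV"
proof -
  define P where "P = {v. z1 v = sv c (z2 v)}"
  have VS: "vector_space sv" using tauD(1)[OF tau] .
  interpret V: Vector_Spaces.vector_space sv by (rule VS)
  have linX: "\<And>x r. Vector_Spaces.linear sv sv (X x r)"
    and linK: "\<And>r i. Vector_Spaces.linear sv sv (K r i)"
    and linD: "\<And>i. Vector_Spaces.linear sv sv (D i)" by (simp_all only: tauD[OF tau])
  have l1: "Vector_Spaces.linear sv sv z1" and l2: "Vector_Spaces.linear sv sv z2"
    by (simp_all only: centD(1)[OF c1] centD(1)[OF c2])
  have X1: "\<And>x r v. z1 (X x r v) = X x r (z1 v)" and X2: "\<And>x r v. z2 (X x r v) = X x r (z2 v)"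
    by (simp_all only: centD[OF c1] centD[OF c2])
  have K1: "\<And>r i v. z1 (K r i v) = K r i (z1 v)" and K2: "\<And>r i v. z2 (K r i v) = K r i (z2 v)"
    by (simp_all only: centD[OF c1] centD[OF c2])
  have D1: "\<And>i v. D i (z1 v) = z1 (D i v) + sv (of_int (m i)) (z1 v)"
    and D2: "\<And>i v. D i (z2 v) = z2 (D i v) + sv (of_int (m i)) (z2 v)"
    by (simp_all only: centD[OF c1] centD[OF c2])
  have sub: "module.subspace sv P"
  proof (rule V.subspaceI)
    show "0 \<in> P" unfolding P_def using lin_facts(3)[OF l1] lin_facts(3)[OF l2] by simp
    show "x + y \<in> P" if "x \<in> P" "y \<in> P" for x y
      using that unfolding P_def by (simp add: lin_facts(1)[OF l1] lin_facts(1)[OF l2] V.scale_right_distrib)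
    show "sv a x \<in> P" if "x \<in> P" for a x
      using that unfolding P_def by (simp add: lin_facts(2)[OF l1] lin_facts(2)[OF l2] mult.commute)
  qed
  have "\<forall>x r. X x r ` P \<subseteq> P"
    unfolding P_def by (auto simp: X1 X2 lin_facts(2)[OF linX])
  moreover have "\<forall>r i. K r i ` P \<subseteq> P"
    unfolding P_def by (auto simp: K1 K2 lin_facts(2)[OF linK])
  moreover have "\<forall>i. D i ` P \<subseteq> P"
  proof (intro allI subsetI)
    fix i y assume "y \<in> D i ` P"
    then obtain v where v: "z1 v = sv c (z2 v)" "y = D i v" unfolding P_def by auto
    have "z1 (D i v) = D i (z1 v) - sv (of_int (m i)) (z1 v)" using D1[of i v] by simp
    also have "\<dots> = sv c (D i (z2 v)) - sv c (sv (of_int (m i)) (z2 v))"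
      by (simp add: v(1) lin_facts(2)[OF linD] mult.commute)
    also have "\<dots> = sv c (z2 (D i v))" by (simp add: D2 V.scale_right_distrib V.scale_scale)
    finally show "y \<in> P" unfolding P_def using v by simp
  qed
  ultimately show ?thesis using irrD[OF irr sub] unfolding P_def by blast
qed


theorem lemma4p6:
  fixes sg :: "complex \<Rightarrow> 'g::ab_group_add \<Rightarrow> 'g"
    and lb :: "'g \<Rightarrow> 'g \<Rightarrow> 'g"
    and B :: "'g \<Rightarrow> 'g \<Rightarrow> complex"
    and H :: "'g set"
    and sv :: "complex \<Rightarrow> 'v::ab_group_add \<Rightarrow> 'v"
    and X :: "'g \<Rightarrow> ('n::finite \<Rightarrow> int) \<Rightarrow> 'v \<Rightarrow> 'v"
    and K :: "('n \<Rightarrow> int) \<Rightarrow> 'n \<Rightarrow> 'v \<Rightarrow> 'v"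
    and D :: "'n \<Rightarrow> 'v \<Rightarrow> 'v"
    and m :: "'n \<Rightarrow> int"
    and z1 z2 :: "'v \<Rightarrow> 'v"
  assumes "CARD('n) \<ge> 2"
    and "base_data sg lb B H"
    and "tau_module sg lb B sv X K D"
    and "irreducible_module sv X K D"
    and "fin_dim_weight_module H sv X K D"
    and "central_operator sv X K D m z1" and "z1 \<noteq> (\<lambda>v. 0)"
    and "central_operator sv X K D m z2" and "z2 \<noteq> (\<lambda>v. 0)"
  shows "\<exists>c::complex. \<forall>v. z1 v = sv c (z2 v)"
  
proof -
  note tau = assms(3) and irr = assms(4)
  have VS: "vector_space sv" using tauD(1)[OF tau] .
  interpret V: Vector_Spaces.vector_space sv by (rule VS)
  have linX: "\<And>x r. Vector_Spaces.linear sv sv (X x r)"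
    and linK: "\<And>r i. Vector_Spaces.linear sv sv (K r i)"
    and linD: "\<And>i. Vector_Spaces.linear sv sv (D i)" by (simp_all only: tauD[OF tau])
  have l1: "Vector_Spaces.linear sv sv z1" and l2: "Vector_Spaces.linear sv sv z2"
    by (simp_all only: centD(1)[OF assms(6)] centD(1)[OF assms(8)])
  interpret L2: Vector_Spaces.linear sv sv z2 by (rule l2)
  have X1: "\<And>x r v. z1 (X x r v) = X x r (z1 v)" and X2: "\<And>x r v. z2 (X x r v) = X x r (z2 v)"
    by (simp_all only: centD[OF assms(6)] centD[OF assms(8)])
  have K1: "\<And>r i v. z1 (K r i v) = K r i (z1 v)" and K2: "\<And>r i v. z2 (K r i v) = K r i (z2 v)"
    by (simp_all only: centD[OF assms(6)] centD[OF assms(8)])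
  have D1: "\<And>i v. D i (z1 v) = z1 (D i v) + sv (of_int (m i)) (z1 v)"
    and D2: "\<And>i v. D i (z2 v) = z2 (D i v) + sv (of_int (m i)) (z2 v)"
    by (simp_all only: centD[OF assms(6)] centD[OF assms(8)])
  have "{v. z2 v = sv 0 (z2 v)} = {0} \<or> {v. z2 v = sv 0 (z2 v)} = UNIV"
    by (rule eqset_trivial[OF tau irr assms(8) assms(8)])
  moreover have "{v. z2 v = sv 0 (z2 v)} \<noteq> UNIV"
  proof
    assume "{v. z2 v = sv 0 (z2 v)} = UNIV"
    then have "z2 v = 0" for v by (simp add: set_eq_iff)
    then show False using assms(9) by (simp add: fun_eq_iff)
  qed
  ultimately have ker: "{v. z2 v = 0} = {0}" by simp
  have inj2: "z2 a = z2 b \<Longrightarrow> a = b" for a b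
  proof -
    assume "z2 a = z2 b"
    then have "z2 (a - b) = 0" by (simp add: lin_facts(4)[OF l2])
    then have "a - b \<in> {v. z2 v = 0}" by simp
    then show "a = b" using ker by simp
  qed
  have "range z2 = UNIV"
  proof -
    have sub: "module.subspace sv (range z2)" using L2.subspace_image[OF V.subspace_UNIV] .
    have "\<forall>x r. X x r ` range z2 \<subseteq> range z2" by (auto simp: X2[symmetric])
    moreover have "\<forall>r i. K r i ` range z2 \<subseteq> range z2" by (auto simp: K2[symmetric])
    moreover have "\<forall>i. D i ` range z2 \<subseteq> range z2"
    proof (intro allI subsetI)
      fix i y assume "y \<in> D i ` range z2"
      then obtain v where "y = D i (z2 v)" by auto
      also have "\<dots> = z2 (D i v + sv (of_int (m i)) v)"
        by (simp only: D2 lin_facts(1)[OF l2] lin_facts(2)[OF l2])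
      finally show "y \<in> range z2" by simp
    qed
    ultimately have "range z2 = {0} \<or> range z2 = UNIV"
      using irrD[OF irr sub] by blast
    moreover have "range z2 \<noteq> {0}"
    proof
      assume "range z2 = {0}"
      then have "z2 v = 0" for v by blast
      then show False using assms(9) by (simp add: fun_eq_iff)
    qed
    ultimately show ?thesis by blast
  qed
  then have surj2: "z2 (inv z2 y) = y" for y by (simp add: surj_f_inv_f)
  define T where "T v = inv z2 (z1 v)" for v
  have zT: "z2 (T v) = z1 v" for v unfolding T_def by (rule surj2)
  have linT: "Vector_Spaces.linear sv sv T"
    unfolding Vector_Spaces.linear_iff
  proof (intro conjI allI)
    show "vector_space sv" by (rule VS)
    show "vector_space sv" by (rule VS)
    show "T (x + y) = T x + T y" for x y
      by (rule inj2) (simp add: zT lin_facts(1)[OF l2] lin_facts(1)[OF l1])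
    show "T (sv c x) = sv c (T x)" for c x
      by (rule inj2) (simp add: zT lin_facts(2)[OF l2] lin_facts(2)[OF l1])
  qed
  have TX: "T (X x r v) = X x r (T v)" for x r v
    by (rule inj2) (simp add: zT X1 X2)
  have TK: "T (K r i v) = K r i (T v)" for r i v
    by (rule inj2) (simp add: zT K1 K2)
  have TD: "T (D i v) = D i (T v)" for i v
  proof (rule inj2)
    have "z2 (D i (T v)) = D i (z1 v) - sv (of_int (m i)) (z1 v)"
      using D2[of i "T v"] by (simp add: zT)
    also have "\<dots> = z1 (D i v)" using D1[of i v] by simp
    finally show "z2 (T (D i v)) = z2 (D i (T v))" by (simp add: zT)
  qed
  have span: "module.span sv (\<Union>\<mu> k \<delta>. weight_space H sv X K D \<mu> k \<delta>) = UNIV"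
    and fdw: "\<And>\<mu> k \<delta>. fin_dim sv (weight_space H sv X K D \<mu> k \<delta>)"
    using assms(5) by (simp_all add: fin_dim_weight_module_def)
  obtain \<mu> k \<delta> w where w: "w \<in> weight_space H sv X K D \<mu> k \<delta>" "w \<noteq> 0"
  proof (rule ccontr)
    assume "\<not> thesis"
    then have "(\<Union>\<mu> k \<delta>. weight_space H sv X K D \<mu> k \<delta>) \<subseteq> V.span {}"
      using that by auto
    then have "module.span sv (\<Union>\<mu> k \<delta>. weight_space H sv X K D \<mu> k \<delta>) \<subseteq> V.span {}"
      by (metis V.span_mono V.span_span)
    then have "(UNIV :: 'v set) = {0}" using span by auto
    then show False using irr by (simp add: irreducible_module_def)
  qed
  define W where "W = weight_space H sv X K D \<mu> k \<delta>"
  obtain S where S: "finite S" "module.span sv S = W"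
    using fdw[of \<mu> k \<delta>] unfolding fin_dim_def W_def by blast
  have TW: "T x \<in> W" if "x \<in> W" for x
  proof -
    from that have a: "\<And>h. h \<in> H \<Longrightarrow> X h (\<lambda>_. 0) x = sv (\<mu> h) x"
      "\<And>i. K (\<lambda>_. 0) i x = sv (k i) x" "\<And>i. D i x = sv (\<delta> i) x"
      unfolding W_def weight_space_def by auto
    have "X h (\<lambda>_. 0) (T x) = sv (\<mu> h) (T x)" if "h \<in> H" for h
      by (simp only: TX[symmetric] a(1)[OF that] lin_facts(2)[OF linT])
    moreover have "K (\<lambda>_. 0) i (T x) = sv (k i) (T x)" for i
      by (simp only: TK[symmetric] a(2) lin_facts(2)[OF linT])
    moreover have "D i (T x) = sv (\<delta> i) (T x)" for i
      by (simp only: TD[symmetric] a(3) lin_facts(2)[OF linT])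
    ultimately show ?thesis unfolding W_def weight_space_def by blast
  qed
  obtain c u where cu: "u \<in> module.span sv S" "u \<noteq> 0" "T u = sv c u"
  proof -
    have inv: "T x \<in> module.span sv S" if "x \<in> module.span sv S" for x
      using TW that S(2) by simp
    have wS: "w \<in> module.span sv S" using w(1) S(2) unfolding W_def by simp
    show ?thesis using eigen_exists[OF VS linT S(1) inv wS w(2)] that by blast
  qed
  have "z1 u = sv c (z2 u)" using zT[of u] cu(3) by (simp add: lin_facts(2)[OF l2])
  then have "{v. z1 v = sv c (z2 v)} \<noteq> {0}" using cu(2) by auto
  then have "{v. z1 v = sv c (z2 v)} = UNIV"
    using eqset_trivial[OF tau irr assms(6) assms(8), of c] by blast
  then have "\<forall>v. z1 v = sv c (z2 v)" by (simp only: set_eq_iff mem_Collect_eq UNIV_I simp_thms)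
  then show ?thesis by (rule exI)
qed

end
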